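(* Let $t\ge 1$ and let $\mathcal H$ be any 3-graph. Let $E_1$ be the set of pairs of vertices contained in at least one and at most $t$ hyperedges of $\mathcal H$, $E_2$ the set of pairs contained in at least $t+1$ and at most $2t$ hyperedges, and $E_3$ the set of pairs contained in at least $2t+1$ and at most $3t$ hyperedges. For $i=1,2,3$ let $\mathcal H_i$ be the set of hyperedges of $\mathcal H$ containing at least $i$ pairs from $E_i$, and let $\mathcal H_4$ be the set of hyperedges containing exactly one pair from $E_2$ and two pairs from $E_3$. Then $$|\mathcal H_1|+|\mathcal H_2|+|\mathcal H_3|+|\mathcal H_4|\le t\,(|E_1|+|E_2|+|E_3|).$$
   Context: A pair (2-subset) $e$ of vertices is said to be contained in a hyperedge $h$ if $e\subset h$. *)

theory Defs
  imports Main
begin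

definition three_graph :: "'a set set \<Rightarrow> bool" where
  "three_graph H \<longleftrightarrow> finite H \<and> (\<forall>h\<in>H. card h = 3)"

definition codeg :: "'a set set \<Rightarrow> 'a set \<Rightarrow> nat" where
  "codeg H e = card {h \<in> H. e \<subseteq> h}"

definition pairs_between :: "'a set set \<Rightarrow> nat \<Rightarrow> nat \<Rightarrow> 'a set set" where
  "pairs_between H lo hi = {e. card e = 2 \<and> lo \<le> codeg H e \<and> codeg H e \<le> hi}"

definition pairs_in :: "'a set set \<Rightarrow> 'a set \<Rightarrow> nat" where
  "pairs_in E h = card {e \<in> E. e \<subseteq> h}"

end

theory Submission
  imports Defs
begin

lemma dc:
  assumes "finite S" "finite E"
  shows "(\<Sum>h\<in>S. pairs_in E h) = (\<Sum>e\<in>E. card {h\<in>S. e \<subseteq> h})"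
proof -
  have "(\<Sum>h\<in>S. pairs_in E h) = (\<Sum>h\<in>S. \<Sum>e\<in>E. if e \<subseteq> h then 1 else 0)"
    unfolding pairs_in_def using assms by (simp add: sum.inter_filter[symmetric])
  also have "\<dots> = (\<Sum>e\<in>E. \<Sum>h\<in>S. if e \<subseteq> h then 1 else 0)" by (rule sum.swap)
  also have "\<dots> = (\<Sum>e\<in>E. card {h\<in>S. e \<subseteq> h})"
    using assms by (simp add: sum.inter_filter[symmetric])
  finally show ?thesis .
qed

lemma upper:
  assumes "finite H" "finite E" "\<And>e. e \<in> E \<Longrightarrow> codeg H e \<le> c"
  shows "(\<Sum>h\<in>H. pairs_in E h) \<le> c * card E"
proof -
  have "(\<Sum>h\<in>H. pairs_in E h) = (\<Sum>e\<in>E. codeg H e)"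
    using dc[OF assms(1,2)] by (simp add: codeg_def)
  also have "\<dots> \<le> (\<Sum>e\<in>E. c)" by (rule sum_mono) (use assms(3) in auto)
  finally show ?thesis by (simp add: mult.commute)
qed

lemma lower:
  assumes "finite H" "A \<subseteq> H" "B \<subseteq> H" "A \<inter> B = {}"
    "\<And>h. h \<in> A \<Longrightarrow> a \<le> f h" "\<And>h. h \<in> B \<Longrightarrow> b \<le> f h"
  shows "a * card A + b * card B \<le> (\<Sum>h\<in>H. (f h :: nat))"
proof -
  have fA: "finite A" "finite B" using assms finite_subset by blast+
  have "a * card A \<le> sum f A" using sum_bounded_below[of A a f] assms(5) by (simp add: mult.commute)
  moreover have "b * card B \<le> sum f B" using sum_bounded_below[of B b f] assms(6) by (simp add: mult.commute)
  moreover have "sum f A + sum f B = sum f (A \<union> B)" using fA assms(4) by (simp add: sum.union_disjoint)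
  moreover have "sum f (A \<union> B) \<le> sum f H" using assms by (intro sum_mono2) auto
  ultimately show ?thesis by linarith
qed

lemma finE:
  assumes "three_graph H" "lo \<ge> 1"
  shows "finite (pairs_between H lo hi)"
proof -
  have fH: "finite H" and c3: "\<forall>h\<in>H. card h = 3" using assms(1) unfolding three_graph_def by auto
  have "finite (\<Union>H)" using fH c3 by (metis card.infinite finite_Union zero_neq_numeral)
  moreover have "pairs_between H lo hi \<subseteq> Pow (\<Union>H)"
  proof
    fix e assume "e \<in> pairs_between H lo hi"
    hence "codeg H e \<ge> 1" using assms(2) unfolding pairs_between_def by auto
    hence "{h\<in>H. e \<subseteq> h} \<noteq> {}" unfolding codeg_def by (metis card.empty not_one_le_zero)
    thus "e \<in> Pow (\<Union>H)" by auto
  qed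
  ultimately show ?thesis by (meson finite_Pow_iff finite_subset)
qed

theorem claim1:
  fixes H :: "'a set set" and t :: nat
  assumes "t \<ge> 1" and "three_graph H"
  defines "E1 \<equiv> pairs_between H 1 t"
      and "E2 \<equiv> pairs_between H (t + 1) (2 * t)"
      and "E3 \<equiv> pairs_between H (2 * t + 1) (3 * t)"
  defines "H1 \<equiv> {h \<in> H. pairs_in E1 h \<ge> 1}"
      and "H2 \<equiv> {h \<in> H. pairs_in E2 h \<ge> 2}"
      and "H3 \<equiv> {h \<in> H. pairs_in E3 h \<ge> 3}"
      and "H4 \<equiv> {h \<in> H. pairs_in E2 h = 1 \<and> pairs_in E3 h = 2}"
  shows "card H1 + card H2 + card H3 + card H4 \<le> t * (card E1 + card E2 + card E3)"
proof -
  have fH: "finite H" using assms(2) unfolding three_graph_def by auto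
  have f1: "finite E1" unfolding E1_def using finE[OF assms(2)] by auto
  have f2: "finite E2" unfolding E2_def using finE[OF assms(2)] by auto
  have f3: "finite E3" unfolding E3_def using finE[OF assms(2)] by auto
  have u1: "(\<Sum>h\<in>H. pairs_in E1 h) \<le> t * card E1"
    using upper[OF fH f1, of t] unfolding E1_def pairs_between_def by auto
  have u2: "(\<Sum>h\<in>H. pairs_in E2 h) \<le> (2*t) * card E2"
    using upper[OF fH f2, of "2*t"] unfolding E2_def pairs_between_def by auto
  have u3: "(\<Sum>h\<in>H. pairs_in E3 h) \<le> (3*t) * card E3"
    using upper[OF fH f3, of "3*t"] unfolding E3_def pairs_between_def by auto
  have l1: "1 * card H1 + 0 * card ({}::'a set set) \<le> (\<Sum>h\<in>H. pairs_in E1 h)"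
    by (rule lower[OF fH]) (auto simp: H1_def)
  have l2: "2 * card H2 + 1 * card H4 \<le> (\<Sum>h\<in>H. pairs_in E2 h)"
    by (rule lower[OF fH]) (auto simp: H2_def H4_def)
  have l3: "3 * card H3 + 2 * card H4 \<le> (\<Sum>h\<in>H. pairs_in E3 h)"
    by (rule lower[OF fH]) (auto simp: H3_def H4_def)
  have "t * (card E1 + card E2 + card E3) = t * card E1 + t * card E2 + t * card E3"
    by (simp add: algebra_simps)
  moreover have "2 * t * card E2 = 2 * (t * card E2)" "3 * t * card E3 = 3 * (t * card E3)" by simp_all
  ultimately show ?thesis using u1 u2 u3 l1 l2 l3 by linarith
qed

end
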